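(* Let $n \geq 2$ and let $(x_i,y_i)_{i=1}^n$ be labeled examples with $x_i \in \mathbb{R}^d$, $y_i \in \{-1,+1\}$ and $\max_i\|x_i\| \leq 1$. Let $X = [x_1,\dots,x_n]\in\mathbb{R}^{d\times n}$ and let $\sigma^2 \geq \frac{1}{n}\|X\|^2$ (spectral norm). Let $\lambda > 0$, $b\in\{1,\dots,n\}$, $T \geq 1$, and $\beta_b := 1 + \frac{(b-1)(n\sigma^2-1)}{n-1}$. Consider the SVM primal objective $$P(w) := \frac{1}{n}\sum_{i=1}^n \max\{0, 1 - y_i\langle w, x_i\rangle\} + \frac{\lambda}{2}\|w\|^2.$$ Run mini-batched Pegasos: set $w^{(1)} = 0$; for $t = 1,\dots,T$, draw $A_t$ uniformly at random among subsets of $\{1,\dots,n\}$ of cardinality $b$ (independently across iterations), set $\eta_t = \frac{1}{\lambda t}$, $A_t^+ = \{i\in A_t : y_i\langle w^{(t)},x_i\rangle < 1\}$, and $$w^{(t+1)} = (1-\eta_t\lambda) w^{(t)} + \frac{\eta_t}{b}\sum_{i\in A_t^+} y_i x_i.$$ Let $\bar{w}^{(T)} = \frac{2}{T}\sum_{t=\lfloor T/2\rfloor+1}^T w^{(t)}$. Then $$\mathbb{E}\big[P(\bar{w}^{(T)})\big] - \inf_{w\in\mathbb{R}^d} P(w) \leq \frac{\beta_b}{b}\cdot\frac{30}{\lambda T}.$$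
   Context: $\|X\|$ is the spectral norm (largest singular value) of $X$. The expectation is over the random mini-batches. *)

theory Defs
  imports "HOL-Analysis.Analysis" "HOL-Probability.Probability"
begin

text \<open>Spectral norm of the matrix X = [x_0, ..., x_(n-1)] (columns x_i), defined as the
  operator norm of the map a |-> sum_i a_i x_i from R^n (Euclidean norm) to the space of the x_i,
  i.e. its largest singular value.\<close>
definition spec_norm :: "nat \<Rightarrow> (nat \<Rightarrow> 'a::euclidean_space) \<Rightarrow> real" where
  "spec_norm n x = Sup {norm (\<Sum>i<n. a i *\<^sub>R x i) | a. (\<Sum>i<n. (a i)\<^sup>2) \<le> 1}"

definition svm_primal :: "nat \<Rightarrow> (nat \<Rightarrow> 'a::euclidean_space) \<Rightarrow> (nat \<Rightarrow> real) \<Rightarrow> real \<Rightarrow> 'a \<Rightarrow> real" where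
  "svm_primal n x y lam w =
     (1 / real n) * (\<Sum>i<n. max 0 (1 - y i * (w \<bullet> x i))) + lam / 2 * (norm w)\<^sup>2"

text \<open>Mini-batched Pegasos iterates: pegasos_w ... A t = w^(t) for t >= 1, with w^(1) = 0
  and A t the mini-batch drawn at iteration t. (The value at t = 0 is an irrelevant dummy.)\<close>
primrec pegasos_w :: "(nat \<Rightarrow> 'a::euclidean_space) \<Rightarrow> (nat \<Rightarrow> real) \<Rightarrow> real \<Rightarrow> nat
    \<Rightarrow> (nat \<Rightarrow> nat set) \<Rightarrow> nat \<Rightarrow> 'a" where
  "pegasos_w x y lam b A 0 = 0"
| "pegasos_w x y lam b A (Suc t) =
     (if t = 0 then 0 else
        (let w = pegasos_w x y lam b A t; eta = 1 / (lam * real t) in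
           (1 - eta * lam) *\<^sub>R w
           + (eta / real b) *\<^sub>R (\<Sum>i\<in>{i \<in> A t. y i * (w \<bullet> x i) < 1}. y i *\<^sub>R x i)))"

definition pegasos_avg :: "(nat \<Rightarrow> 'a::euclidean_space) \<Rightarrow> (nat \<Rightarrow> real) \<Rightarrow> real \<Rightarrow> nat
    \<Rightarrow> nat \<Rightarrow> (nat \<Rightarrow> nat set) \<Rightarrow> 'a" where
  "pegasos_avg x y lam b T A = (2 / real T) *\<^sub>R (\<Sum>t\<in>{T div 2 + 1..T}. pegasos_w x y lam b A t)"

definition batches :: "nat \<Rightarrow> nat \<Rightarrow> nat set set" where
  "batches n b = {S. S \<subseteq> {..<n} \<and> card S = b}"

definition batch_seq_pmf :: "nat \<Rightarrow> nat \<Rightarrow> nat \<Rightarrow> (nat \<Rightarrow> nat set) pmf" where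
  "batch_seq_pmf n b T = Pi_pmf {1..T} {} (\<lambda>_. pmf_of_set (batches n b))"

end

theory Submission
  imports Defs
begin

lemma expectation_pair_finite:
  fixes f :: "'a \<times> 'b \<Rightarrow> real"
  assumes fp: "finite (set_pmf p)" and fq: "finite (set_pmf q)"
  shows "measure_pmf.expectation (pair_pmf p q) f
       = measure_pmf.expectation q (\<lambda>b. measure_pmf.expectation p (\<lambda>a. f (a,b)))"
proof -
  have "measure_pmf.expectation (pair_pmf p q) f = (\<Sum>z\<in>set_pmf p \<times> set_pmf q. f z * pmf (pair_pmf p q) z)"
    using fp fq by (intro integral_measure_pmf_real) (auto simp: set_pair_pmf)
  also have "\<dots> = (\<Sum>b\<in>set_pmf q. (\<Sum>a\<in>set_pmf p. f (a,b) * pmf p a) * pmf q b)"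
  proof -
    have "(\<Sum>z\<in>set_pmf p \<times> set_pmf q. f z * pmf (pair_pmf p q) z)
        = (\<Sum>a\<in>set_pmf p. \<Sum>b\<in>set_pmf q. f (a,b) * pmf p a * pmf q b)"
      by (subst sum.cartesian_product) (auto intro!: sum.cong simp: pmf_pair mult_ac)
    also have "\<dots> = (\<Sum>b\<in>set_pmf q. \<Sum>a\<in>set_pmf p. f (a,b) * pmf p a * pmf q b)"
      by (rule sum.swap)
    finally show ?thesis by (simp add: sum_distrib_right)
  qed
  also have "\<dots> = measure_pmf.expectation q (\<lambda>b. measure_pmf.expectation p (\<lambda>a. f (a,b)))"
    using fp fq by (subst integral_measure_pmf_real[of "set_pmf q"])
      (auto intro!: sum.cong simp: integral_measure_pmf_real[of "set_pmf p"])
  finally show ?thesis .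
qed

lemma resample:
  fixes F :: "('i \<Rightarrow> 'c) \<Rightarrow> real"
  assumes A: "finite A" and t: "t \<in> A" and fin: "\<And>x. finite (set_pmf (p x))"
  shows "measure_pmf.expectation (Pi_pmf A d p) F
       = measure_pmf.expectation (Pi_pmf A d p) (\<lambda>f. measure_pmf.expectation (p t) (\<lambda>s. F (f(t:=s))))"
proof -
  let ?M = "Pi_pmf A d p" and ?M' = "Pi_pmf (A - {t}) d p"
  have finM': "finite (set_pmf ?M')" using A fin
    by (subst set_Pi_pmf) (auto intro!: finite_PiE_dflt)
  have "A = insert t (A - {t})" using t by auto
  hence M: "?M = map_pmf (\<lambda>(y,g). g(t:=y)) (pair_pmf (p t) ?M')"
    using A Pi_pmf_insert[of "A - {t}" t d p] by simp
  have M': "?M' = map_pmf (\<lambda>f. f(t := d)) ?M" using Pi_pmf_remove[OF A] .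
  have "measure_pmf.expectation ?M F
      = measure_pmf.expectation (pair_pmf (p t) ?M') (\<lambda>(y,g). F (g(t:=y)))"
    by (subst M) (simp add: case_prod_beta')
  also have "\<dots> = measure_pmf.expectation ?M' (\<lambda>g. measure_pmf.expectation (p t) (\<lambda>y. F (g(t:=y))))"
    by (subst expectation_pair_finite[OF fin finM']) simp
  also have "\<dots> = measure_pmf.expectation ?M (\<lambda>f. measure_pmf.expectation (p t) (\<lambda>y. F ((f(t:=d))(t:=y))))"
    by (subst M') simp
  also have "\<dots> = measure_pmf.expectation ?M (\<lambda>f. measure_pmf.expectation (p t) (\<lambda>s. F (f(t:=s))))"
    by simp
  finally show ?thesis .
qed

lemma card_supsets:
  assumes U: "finite U" and F: "F \<subseteq> U" and k: "card F \<le> k"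
  shows "card {S. S \<subseteq> U \<and> card S = k \<and> F \<subseteq> S} = (card U - card F) choose (k - card F)"
proof -
  have fF: "finite F" using U F finite_subset by blast
  have "bij_betw (\<lambda>S. S - F) {S. S \<subseteq> U \<and> card S = k \<and> F \<subseteq> S} {S'. S' \<subseteq> U - F \<and> card S' = k - card F}"
  proof (rule bij_betw_byWitness[where f' = "\<lambda>S'. S' \<union> F"])
    show "\<forall>S\<in>{S. S \<subseteq> U \<and> card S = k \<and> F \<subseteq> S}. S - F \<union> F = S" by auto
    show "\<forall>S'\<in>{S'. S' \<subseteq> U - F \<and> card S' = k - card F}. S' \<union> F - F = S'" by auto
    show "(\<lambda>S. S - F) ` {S. S \<subseteq> U \<and> card S = k \<and> F \<subseteq> S} \<subseteq> {S'. S' \<subseteq> U - F \<and> card S' = k - card F}"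
    proof (rule image_subsetI, safe)
      fix S assume "S \<subseteq> U" "F \<subseteq> S" "k = card S"
      then show "card (S - F) = card S - card F" using U fF
        by (simp add: card_Diff_subset finite_subset)
    qed auto
    show "(\<lambda>S'. S' \<union> F) ` {S'. S' \<subseteq> U - F \<and> card S' = k - card F} \<subseteq> {S. S \<subseteq> U \<and> card S = k \<and> F \<subseteq> S}"
    proof (rule image_subsetI, safe)
      fix S' assume a: "S' \<subseteq> U - F" "card S' = k - card F"
      hence "finite S'" using U finite_subset by blast
      moreover have "S' \<inter> F = {}" using a by auto
      ultimately show "card (S' \<union> F) = k" using a k fF by (simp add: card_Un_disjoint)
    qed (use F in auto)
  qed
  hence "card {S. S \<subseteq> U \<and> card S = k \<and> F \<subseteq> S} = card {S'. S' \<subseteq> U - F \<and> card S' = k - card F}"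
    by (rule bij_betw_same_card)
  also have "\<dots> = card (U - F) choose (k - card F)"
    using U by (intro n_subsets) auto
  finally show ?thesis using F fF by (simp add: card_Diff_subset)
qed

lemma card_batches: "card (batches n b) = n choose b"
  unfolding batches_def using n_subsets[of "{..<n}" b] by simp

lemma finite_batches: "finite (batches n b)"
  unfolding batches_def by (auto intro: finite_subset)

lemma count1:
  assumes "i < n" "1 \<le> b" "b \<le> n"
  shows "card {S\<in>batches n b. i \<in> S} = (n - 1) choose (b - 1)"
proof -
  have "{S\<in>batches n b. i \<in> S} = {S. S \<subseteq> {..<n} \<and> card S = b \<and> {i} \<subseteq> S}"
    by (auto simp: batches_def)
  thus ?thesis using card_supsets[of "{..<n}" "{i}" b] assms by simp
qed

lemma count2:
  assumes "i < n" "j < n" "i \<noteq> j" "2 \<le> b" "b \<le> n"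
  shows "card {S\<in>batches n b. i \<in> S \<and> j \<in> S} = (n - 2) choose (b - 2)"
proof -
  have "{S\<in>batches n b. i \<in> S \<and> j \<in> S} = {S. S \<subseteq> {..<n} \<and> card S = b \<and> {i,j} \<subseteq> S}"
    by (auto simp: batches_def)
  thus ?thesis using card_supsets[of "{..<n}" "{i,j}" b] assms by (simp add: numeral_2_eq_2)
qed

lemma count2_one:
  assumes "i \<noteq> j"
  shows "card {S\<in>batches n 1. i \<in> S \<and> j \<in> S} = 0"
proof -
  have "{S\<in>batches n 1. i \<in> S \<and> j \<in> S} = {}"
    using assms by (auto simp: batches_def card_1_singleton_iff)
  thus ?thesis by (metis card.empty)
qed

lemma binom_ratio1:
  assumes "1 \<le> b" "b \<le> n"
  shows "real ((n - 1) choose (b - 1)) * real n = real (n choose b) * real b"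
proof -
  define m where "m = n - 1"
  define k where "k = b - 1"
  have mk: "n = Suc m" "b = Suc k" using assms unfolding m_def k_def by arith+
  have "Suc m * (m choose k) = (Suc m choose Suc k) * Suc k" by (rule Suc_times_binomial_eq)
  hence "real (Suc m * (m choose k)) = real ((Suc m choose Suc k) * Suc k)" by (simp only:)
  hence "real (m choose k) * real (Suc m) = real (Suc m choose Suc k) * real (Suc k)"
    by (simp only: of_nat_mult mult.commute)
  thus ?thesis using mk by simp
qed

lemma binom_ratio2:
  assumes "2 \<le> b" "b \<le> n"
  shows "real ((n - 2) choose (b - 2)) * (real n * (real n - 1)) = real (n choose b) * (real b * (real b - 1))"
proof -
  define m where "m = n - 2"
  define k where "k = b - 2"
  have mk: "n = Suc (Suc m)" "b = Suc (Suc k)" using assms unfolding m_def k_def by arith+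
  have e1: "Suc m * (m choose k) = (Suc m choose Suc k) * Suc k" by (rule Suc_times_binomial_eq)
  have e2: "Suc (Suc m) * (Suc m choose Suc k) = (Suc (Suc m) choose Suc (Suc k)) * Suc (Suc k)" by (rule Suc_times_binomial_eq)
  have "real (m choose k) * (real (Suc (Suc m)) * real (Suc m))
      = real (Suc (Suc m) choose Suc (Suc k)) * (real (Suc (Suc k)) * real (Suc k))"
  proof -
    have "real (m choose k) * (real (Suc (Suc m)) * real (Suc m)) = real (Suc (Suc m)) * real (Suc m * (m choose k))"
      by (simp add: algebra_simps)
    also have "\<dots> = real (Suc (Suc m) * (Suc m choose Suc k)) * real (Suc k)" by (simp only: e1) (simp add: algebra_simps)
    also have "\<dots> = real (Suc (Suc m) choose Suc (Suc k)) * (real (Suc (Suc k)) * real (Suc k))"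
      by (simp only: e2) (simp add: algebra_simps)
    finally show ?thesis .
  qed
  thus ?thesis using mk by simp
qed

lemma sq_comb:
  fixes a c :: "'a::real_inner"
  shows "(norm ((1 - s) *\<^sub>R a + s *\<^sub>R c))\<^sup>2
       = (1 - s) * (norm a)\<^sup>2 + s * (norm c)\<^sup>2 - s * (1 - s) * (norm (a - c))\<^sup>2"
  unfolding power2_norm_eq_inner
  by (simp add: inner_add_left inner_add_right inner_diff_left inner_diff_right
      inner_commute algebra_simps)

lemma convex_sq_norm: "convex_on UNIV (\<lambda>v::'a::real_inner. (norm v)\<^sup>2)"
proof (rule convex_onI)
  fix t :: real and a c :: 'a assume "0 < t" "t < 1"
  then show "(norm ((1 - t) *\<^sub>R a + t *\<^sub>R c))\<^sup>2 \<le> (1 - t) * (norm a)\<^sup>2 + t * (norm c)\<^sup>2"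
    unfolding sq_comb by (simp add: mult_nonneg_nonneg)
qed simp

lemma jensen_avg:
  assumes "finite I" "I \<noteq> {}" "convex_on UNIV f"
  shows "f ((1 / real (card I)) *\<^sub>R (\<Sum>i\<in>I. v i)) \<le> (1 / real (card I)) * (\<Sum>i\<in>I. f (v i))"
proof -
  have "f (\<Sum>i\<in>I. (1 / real (card I)) *\<^sub>R v i) \<le> (\<Sum>i\<in>I. (1 / real (card I)) * f (v i))"
    using assms by (intro convex_on_sum) (auto simp: card_gt_0_iff)
  thus ?thesis by (simp add: scaleR_sum_right sum_distrib_left)
qed

lemma spec_bound:
  fixes x :: "nat \<Rightarrow> 'a::euclidean_space"
  shows "(norm (\<Sum>i<n. a i *\<^sub>R x i))\<^sup>2 \<le> (spec_norm n x)\<^sup>2 * (\<Sum>i<n. (a i)\<^sup>2)"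
proof -
  let ?Z = "{norm (\<Sum>i<n. a i *\<^sub>R x i) | a. (\<Sum>i<n. (a i)\<^sup>2) \<le> 1}"
  have bdd: "bdd_above ?Z"
  proof (rule bdd_aboveI[where M = "\<Sum>i<n. norm (x i)"], safe)
    fix a :: "nat \<Rightarrow> real" assume a: "(\<Sum>i<n. (a i)\<^sup>2) \<le> 1"
    have ai: "\<bar>a i\<bar> \<le> 1" if "i < n" for i
    proof -
      have "(a i)\<^sup>2 \<le> (\<Sum>i<n. (a i)\<^sup>2)"
        using that by (intro member_le_sum) auto
      hence "(a i)\<^sup>2 \<le> 1" using a by simp
      thus ?thesis by (simp add: abs_square_le_1)
    qed
    have "norm (\<Sum>i<n. a i *\<^sub>R x i) \<le> (\<Sum>i<n. norm (a i *\<^sub>R x i))" by (rule norm_sum)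
    also have "\<dots> \<le> (\<Sum>i<n. norm (x i))"
      using ai by (intro sum_mono) (auto intro!: mult_left_le_one_le)
    finally show "norm (\<Sum>i<n. a i *\<^sub>R x i) \<le> (\<Sum>i<n. norm (x i))" .
  qed
  have inZ: "norm (\<Sum>i<n. c i *\<^sub>R x i) \<le> spec_norm n x" if "(\<Sum>i<n. (c i)\<^sup>2) \<le> 1" for c
    unfolding spec_norm_def using that by (intro cSup_upper bdd) blast
  define s where "s = sqrt (\<Sum>i<n. (a i)\<^sup>2)"
  have s2: "s\<^sup>2 = (\<Sum>i<n. (a i)\<^sup>2)" unfolding s_def by (simp add: sum_nonneg)
  show ?thesis
  proof (cases "s = 0")
    case True
    hence "\<forall>i\<in>{..<n}. a i = 0" using s2 by (simp add: sum_nonneg_eq_0_iff)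
    hence "(\<Sum>i<n. a i *\<^sub>R x i) = 0" by simp
    thus ?thesis by (simp add: sum_nonneg)
  next
    case False
    have "s \<ge> 0" unfolding s_def by (simp add: sum_nonneg)
    hence spos: "s > 0" using False by simp
    have "(\<Sum>i<n. (a i / s)\<^sup>2) = (\<Sum>i<n. (a i)\<^sup>2) / s\<^sup>2"
      by (simp add: power_divide sum_divide_distrib)
    also have "\<dots> = 1" using s2 spos by (metis divide_self power_not_zero less_irrefl)
    finally have "norm (\<Sum>i<n. (a i / s) *\<^sub>R x i) \<le> spec_norm n x" by (intro inZ) simp
    moreover have "(\<Sum>i<n. (a i / s) *\<^sub>R x i) = (1/s) *\<^sub>R (\<Sum>i<n. a i *\<^sub>R x i)"
      by (simp add: scaleR_sum_right)
    ultimately have "norm ((1/s) *\<^sub>R (\<Sum>i<n. a i *\<^sub>R x i)) \<le> spec_norm n x" by simp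
    hence "norm (\<Sum>i<n. a i *\<^sub>R x i) / s \<le> spec_norm n x" using spos by simp
    hence "norm (\<Sum>i<n. a i *\<^sub>R x i) \<le> spec_norm n x * s" using spos by (simp add: divide_le_eq)
    hence "(norm (\<Sum>i<n. a i *\<^sub>R x i))\<^sup>2 \<le> (spec_norm n x * s)\<^sup>2"
      by (intro power_mono) auto
    thus ?thesis by (simp only: power_mult_distrib s2)
  qed
qed

lemma batch_sum_lin:
  fixes z :: "nat \<Rightarrow> 'a::real_vector"
  shows "(\<Sum>S\<in>batches n b. \<Sum>i\<in>S. z i) = (\<Sum>i<n. real (card {S\<in>batches n b. i \<in> S}) *\<^sub>R z i)"
proof -
  have "(\<Sum>S\<in>batches n b. \<Sum>i\<in>S. z i) = (\<Sum>S\<in>batches n b. \<Sum>i<n. if i \<in> S then z i else 0)"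
  proof (rule sum.cong[OF refl])
    fix S assume "S \<in> batches n b"
    hence "S \<subseteq> {..<n}" by (simp add: batches_def)
    hence "S = {i\<in>{..<n}. i \<in> S}" by auto
    hence "(\<Sum>i\<in>S. z i) = (\<Sum>i\<in>{i\<in>{..<n}. i \<in> S}. z i)" by simp
    also have "\<dots> = (\<Sum>i<n. if i \<in> S then z i else 0)" by (rule sum.inter_filter) simp
    finally show "(\<Sum>i\<in>S. z i) = (\<Sum>i<n. if i \<in> S then z i else 0)" .
  qed
  also have "\<dots> = (\<Sum>i<n. \<Sum>S\<in>batches n b. if i \<in> S then z i else 0)" by (rule sum.swap)
  also have "\<dots> = (\<Sum>i<n. real (card {S\<in>batches n b. i \<in> S}) *\<^sub>R z i)"
  proof (rule sum.cong[OF refl])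
    fix i
    have "(\<Sum>S\<in>batches n b. if i \<in> S then z i else 0) = (\<Sum>S\<in>{S\<in>batches n b. i \<in> S}. z i)"
      by (rule sum.inter_filter[symmetric]) (rule finite_batches)
    thus "(\<Sum>S\<in>batches n b. if i \<in> S then z i else 0) = real (card {S\<in>batches n b. i \<in> S}) *\<^sub>R z i"
      by (simp add: sum_constant_scaleR)
  qed
  finally show ?thesis .
qed

lemma batch_sum_sq:
  fixes z :: "nat \<Rightarrow> 'a::real_inner"
  shows "(\<Sum>S\<in>batches n b. (norm (\<Sum>i\<in>S. z i))\<^sup>2)
       = (\<Sum>i<n. \<Sum>j<n. real (card {S\<in>batches n b. i \<in> S \<and> j \<in> S}) * (z i \<bullet> z j))"
proof -
  have "(\<Sum>S\<in>batches n b. (norm (\<Sum>i\<in>S. z i))\<^sup>2)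
      = (\<Sum>S\<in>batches n b. \<Sum>i<n. \<Sum>j<n. if i \<in> S \<and> j \<in> S then z i \<bullet> z j else 0)"
  proof (rule sum.cong[OF refl])
    fix S assume "S \<in> batches n b"
    hence Sn: "S \<subseteq> {..<n}" by (simp add: batches_def)
    have e: "(\<Sum>i\<in>S. f i) = (\<Sum>i<n. if i \<in> S then f i else 0)" for f :: "nat \<Rightarrow> real"
    proof -
      have "S = {i\<in>{..<n}. i \<in> S}" using Sn by auto
      hence "(\<Sum>i\<in>S. f i) = (\<Sum>i\<in>{i\<in>{..<n}. i \<in> S}. f i)" by simp
      also have "\<dots> = (\<Sum>i<n. if i \<in> S then f i else 0)" by (rule sum.inter_filter) simp
      finally show ?thesis .
    qed
    have "(norm (\<Sum>i\<in>S. z i))\<^sup>2 = (\<Sum>i\<in>S. \<Sum>j\<in>S. z i \<bullet> z j)"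
      by (simp add: power2_norm_eq_inner inner_sum_left inner_sum_right) (rule sum.swap)
    also have "\<dots> = (\<Sum>i<n. if i \<in> S then (\<Sum>j<n. if j \<in> S then z i \<bullet> z j else 0) else 0)"
      by (simp add: e)
    also have "\<dots> = (\<Sum>i<n. \<Sum>j<n. if i \<in> S \<and> j \<in> S then z i \<bullet> z j else 0)"
      by (intro sum.cong refl) auto
    finally show "(norm (\<Sum>i\<in>S. z i))\<^sup>2 = (\<Sum>i<n. \<Sum>j<n. if i \<in> S \<and> j \<in> S then z i \<bullet> z j else 0)" .
  qed
  also have "\<dots> = (\<Sum>i<n. \<Sum>S\<in>batches n b. \<Sum>j<n. if i \<in> S \<and> j \<in> S then z i \<bullet> z j else 0)"
    by (rule sum.swap)
  also have "\<dots> = (\<Sum>i<n. \<Sum>j<n. \<Sum>S\<in>batches n b. if i \<in> S \<and> j \<in> S then z i \<bullet> z j else 0)"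
    by (intro sum.cong refl sum.swap)
  also have "\<dots> = (\<Sum>i<n. \<Sum>j<n. real (card {S\<in>batches n b. i \<in> S \<and> j \<in> S}) * (z i \<bullet> z j))"
  proof (intro sum.cong refl)
    fix i j
    have "(\<Sum>S\<in>batches n b. if i \<in> S \<and> j \<in> S then z i \<bullet> z j else 0)
        = (\<Sum>S\<in>{S\<in>batches n b. i \<in> S \<and> j \<in> S}. z i \<bullet> z j)"
      by (rule sum.inter_filter[symmetric]) (rule finite_batches)
    thus "(\<Sum>S\<in>batches n b. if i \<in> S \<and> j \<in> S then z i \<bullet> z j else 0)
        = real (card {S\<in>batches n b. i \<in> S \<and> j \<in> S}) * (z i \<bullet> z j)" by simp
  qed
  finally show ?thesis .
qed

locale peg =
  fixes n b T :: nat and x :: "nat \<Rightarrow> 'a::euclidean_space" and y :: "nat \<Rightarrow> real"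
    and sigma2 lam :: real
  assumes n2: "n \<ge> 2"
    and yv: "\<forall>i<n. y i \<in> {-1, 1}"
    and xn: "\<forall>i<n. norm (x i) \<le> 1"
    and sig: "sigma2 \<ge> (1 / real n) * (spec_norm n x)\<^sup>2"
    and lam: "lam > 0"
    and bn: "b \<in> {1..n}"
    and T1: "T \<ge> 1"
begin

definition "P w = svm_primal n x y lam w"
definition "L w = (1 / real n) * (\<Sum>i<n. max 0 (1 - y i * (w \<bullet> x i)))"
definition "act w i = (y i * (w \<bullet> x i) < 1)"
definition "zz w i = (if act w i then y i *\<^sub>R x i else 0)"
definition "vv w S = (1 / real b) *\<^sub>R (\<Sum>i\<in>{i \<in> S. y i * (w \<bullet> x i) < 1}. y i *\<^sub>R x i)"
definition "gbar w = (1 / real n) *\<^sub>R (\<Sum>i<n. zz w i)"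
definition "G2 = (1 + (real b - 1) * (real n * sigma2 - 1) / (real n - 1)) / real b"
abbreviation "B \<equiv> batches n b"
definition "N = real (card B)"

lemma P_L: "P w = L w + lam / 2 * (norm w)\<^sup>2"
  by (simp add: P_def L_def svm_primal_def)

lemma b1: "1 \<le> b" and bn': "b \<le> n" using bn by auto

lemma N_eq: "N = real (n choose b)" by (simp add: N_def card_batches)
lemma N_pos: "N > 0" using bn' by (simp add: N_eq)

lemma vv_zz: "S \<in> B \<Longrightarrow> vv w S = (1 / real b) *\<^sub>R (\<Sum>i\<in>S. zz w i)"
proof -
  assume "S \<in> B"
  hence fS: "finite S" unfolding batches_def by (auto intro: finite_subset)
  have "(\<Sum>i\<in>{i \<in> S. y i * (w \<bullet> x i) < 1}. y i *\<^sub>R x i) = (\<Sum>i\<in>S. zz w i)"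
    unfolding zz_def act_def by (rule sum.inter_filter[OF fS])
  thus ?thesis by (simp add: vv_def)
qed

lemma sum_vv: "(\<Sum>S\<in>B. vv w S) = N *\<^sub>R gbar w"
proof -
  have K1: "real ((n - 1) choose (b - 1)) * real n = N * real b"
    using binom_ratio1[OF b1 bn'] by (simp add: N_eq)
  have "(\<Sum>S\<in>B. vv w S) = (1 / real b) *\<^sub>R (\<Sum>S\<in>B. \<Sum>i\<in>S. zz w i)"
    by (simp add: vv_zz scaleR_sum_right)
  also have "\<dots> = (1 / real b) *\<^sub>R (\<Sum>i<n. real ((n - 1) choose (b - 1)) *\<^sub>R zz w i)"
    by (simp add: batch_sum_lin count1[OF _ b1 bn'])
  also have "\<dots> = (real ((n - 1) choose (b - 1)) / real b) *\<^sub>R (\<Sum>i<n. zz w i)"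
    by (simp add: scaleR_sum_right)
  also have "real ((n - 1) choose (b - 1)) / real b = N / real n"
    using K1 b1 n2 by (simp add: field_simps)
  finally show ?thesis by (simp add: gbar_def)
qed

lemma G2_alt: "G2 = (1 / real b) * (1 + (real b - 1) * (real n * sigma2 - 1) / (real n - 1))"
  by (simp add: G2_def)

lemma spec_le: "(spec_norm n x)\<^sup>2 \<le> real n * sigma2"
  using sig n2 by (simp add: field_simps)

lemma beta_nonneg: "0 \<le> 1 + (real b - 1) * (real n * sigma2 - 1) / (real n - 1)"
proof -
  have "real n * sigma2 \<ge> 0" using spec_le by (meson order_trans zero_le_power2)
  hence "(real b - 1) * (real n * sigma2 - 1) \<ge> (real b - 1) * (-1)"
    using b1 by (intro mult_left_mono) auto
  hence "(real b - 1) * (real n * sigma2 - 1) / (real n - 1) \<ge> (real b - 1) * (-1) / (real n - 1)"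
    using n2 by (intro divide_right_mono) auto
  moreover have "(real b - 1) * (-1) / (real n - 1) \<ge> -1"
    using n2 bn' by (simp add: field_simps)
  ultimately show ?thesis by linarith
qed

lemma G2_nonneg: "G2 \<ge> 0"
  using beta_nonneg b1 by (simp add: G2_def)

end

lemma double_sum_diag:
  fixes f :: "nat \<Rightarrow> nat \<Rightarrow> real"
  assumes "finite I"
  shows "(\<Sum>i\<in>I. \<Sum>j\<in>I. (if i = j then p else q) * f i j)
       = q * (\<Sum>i\<in>I. \<Sum>j\<in>I. f i j) + (p - q) * (\<Sum>i\<in>I. f i i)"
proof -
  have "(\<Sum>i\<in>I. \<Sum>j\<in>I. (if i = j then p else q) * f i j)
      = (\<Sum>i\<in>I. \<Sum>j\<in>I. q * f i j + (if i = j then (p - q) * f i j else 0))"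
    by (intro sum.cong refl) (simp add: algebra_simps)
  also have "\<dots> = (\<Sum>i\<in>I. q * (\<Sum>j\<in>I. f i j) + (p - q) * f i i)"
    using assms by (simp add: sum.distrib sum_distrib_left)
  also have "\<dots> = q * (\<Sum>i\<in>I. \<Sum>j\<in>I. f i j) + (p - q) * (\<Sum>i\<in>I. f i i)"
    by (simp add: sum.distrib sum_distrib_left)
  finally show ?thesis .
qed

context peg begin

definition "K1 = real ((n - 1) choose (b - 1))"
definition "K2 = (if b \<ge> 2 then real ((n - 2) choose (b - 2)) else 0)"

lemma K1_eq: "K1 = N * real b / real n"
  using binom_ratio1[OF b1 bn'] n2 by (simp add: N_eq K1_def field_simps)

lemma K2_eq: "K2 = N * real b * (real b - 1) / (real n * (real n - 1))"
proof (cases "b \<ge> 2")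
  case True
  have pos: "real n * (real n - 1) \<noteq> 0" using n2 by simp
  have "real ((n - 2) choose (b - 2)) = real (n choose b) * (real b * (real b - 1)) / (real n * (real n - 1))"
    using binom_ratio2[OF True bn'] pos by (simp add: eq_divide_eq)
  thus ?thesis using True by (simp add: N_eq K2_def)
next
  case False
  have k0: "K2 = 0" using False by (simp add: K2_def)
  have "b = 1" using False b1 by simp
  thus ?thesis using k0 by simp
qed

lemma card_pair: "i < n \<Longrightarrow> j < n \<Longrightarrow> real (card {S\<in>B. i \<in> S \<and> j \<in> S}) = (if i = j then K1 else K2)"
proof -
  assume ij: "i < n" "j < n"
  show ?thesis
  proof (cases "i = j")
    case True
    thus ?thesis using count1[OF ij(1) b1 bn'] by (simp add: K1_def)
  next
    case False
    show ?thesis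
    proof (cases "b \<ge> 2")
      case True
      thus ?thesis using count2[OF ij False True bn'] False by (simp add: K2_def)
    next
      case nb: False
      have k0: "K2 = 0" using nb by (simp add: K2_def)
      have "b = 1" using nb b1 by simp
      thus ?thesis using count2_one[OF False, of n] False k0 by simp
    qed
  qed
qed

lemma sum_sq_zz:
  "(\<Sum>S\<in>B. (norm (\<Sum>i\<in>S. zz w i))\<^sup>2)
     = K2 * (norm (\<Sum>i<n. zz w i))\<^sup>2 + (K1 - K2) * (\<Sum>i<n. (norm (zz w i))\<^sup>2)"
proof -
  have "(\<Sum>S\<in>B. (norm (\<Sum>i\<in>S. zz w i))\<^sup>2)
      = (\<Sum>i<n. \<Sum>j<n. (if i = j then K1 else K2) * (zz w i \<bullet> zz w j))"
    by (simp add: batch_sum_sq card_pair)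
  also have "\<dots> = K2 * (\<Sum>i<n. \<Sum>j<n. zz w i \<bullet> zz w j) + (K1 - K2) * (\<Sum>i<n. zz w i \<bullet> zz w i)"
    by (rule double_sum_diag) simp
  also have "(\<Sum>i<n. \<Sum>j<n. zz w i \<bullet> zz w j) = (norm (\<Sum>i<n. zz w i))\<^sup>2"
    by (simp add: power2_norm_eq_inner inner_sum_left inner_sum_right) (rule sum.swap)
  also have "(\<Sum>i<n. zz w i \<bullet> zz w i) = (\<Sum>i<n. (norm (zz w i))\<^sup>2)"
    by (simp add: power2_norm_eq_inner)
  finally show ?thesis .
qed

definition "aa w i = (if act w i then y i else 0)"

lemma zz_aa: "zz w i = aa w i *\<^sub>R x i" by (simp add: zz_def aa_def)

lemma aa_sq: "i < n \<Longrightarrow> (aa w i)\<^sup>2 = (if act w i then 1 else 0)"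
  using yv by (auto simp: aa_def)

lemma sum_aa_le: "(\<Sum>i<n. (aa w i)\<^sup>2) \<le> real n"
proof -
  have "(\<Sum>i<n. (aa w i)\<^sup>2) \<le> (\<Sum>i<n. (1::real))"
    by (intro sum_mono) (simp add: aa_sq)
  thus ?thesis by simp
qed

lemma sum_norm_zz_le: "(\<Sum>i<n. (norm (zz w i))\<^sup>2) \<le> (\<Sum>i<n. (aa w i)\<^sup>2)"
proof (intro sum_mono)
  fix i assume "i \<in> {..<n}"
  hence "norm (x i) \<le> 1" using xn by simp
  hence "(norm (x i))\<^sup>2 \<le> 1" by (simp add: power_le_one)
  hence "(aa w i)\<^sup>2 * (norm (x i))\<^sup>2 \<le> (aa w i)\<^sup>2 * 1" by (intro mult_left_mono) auto
  thus "(norm (zz w i))\<^sup>2 \<le> (aa w i)\<^sup>2" by (simp add: zz_aa power_mult_distrib)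
qed

lemma sum_vv_sq: "(\<Sum>S\<in>B. (norm (vv w S))\<^sup>2) \<le> N * G2"
proof -
  define m where "m = (\<Sum>i<n. (aa w i)\<^sup>2)"
  define S2 where "S2 = (norm (\<Sum>i<n. zz w i))\<^sup>2"
  define S1 where "S1 = (\<Sum>i<n. (norm (zz w i))\<^sup>2)"
  define beta where "beta = 1 + (real b - 1) * (real n * sigma2 - 1) / (real n - 1)"
  have m0: "m \<ge> 0" unfolding m_def by (simp add: sum_nonneg)
  have mn: "m \<le> real n" unfolding m_def by (rule sum_aa_le)
  have S2m: "S2 \<le> (spec_norm n x)\<^sup>2 * m"
    unfolding S2_def m_def zz_aa by (rule spec_bound)
  have S2m': "S2 \<le> real n * sigma2 * m"
    using S2m spec_le m0 by (meson order_trans mult_right_mono)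
  have S1m: "S1 \<le> m" unfolding S1_def m_def by (rule sum_norm_zz_le)
  have nn: "real n > 1" using n2 by simp
  have K2nn: "K2 \<ge> 0" unfolding K2_eq using N_pos b1 nn by (intro divide_nonneg_pos) auto
  have K12: "K1 - K2 = N * real b / real n * ((real n - real b) / (real n - 1))"
    unfolding K1_eq K2_eq using nn by (simp add: field_simps)
  have K12nn: "K1 - K2 \<ge> 0" unfolding K12 using N_pos b1 bn' nn
    by (intro mult_nonneg_nonneg divide_nonneg_pos) auto
  have beta_eq: "beta = ((real n - real b) + (real b - 1) * (real n * sigma2)) / (real n - 1)"
    unfolding beta_def using nn by (simp add: field_simps)
  have beta0: "beta \<ge> 0" unfolding beta_def by (rule beta_nonneg)
  have "(\<Sum>S\<in>B. (norm (vv w S))\<^sup>2) = (1 / real b)\<^sup>2 * (\<Sum>S\<in>B. (norm (\<Sum>i\<in>S. zz w i))\<^sup>2)"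
    by (subst sum_distrib_left, intro sum.cong refl) (simp add: vv_zz power_divide)
  also have "\<dots> = (1 / real b)\<^sup>2 * (K2 * S2 + (K1 - K2) * S1)"
    by (simp add: sum_sq_zz S1_def S2_def)
  also have "K2 * S2 + (K1 - K2) * S1 \<le> K2 * (real n * sigma2 * m) + (K1 - K2) * m"
    using K2nn K12nn S2m' S1m by (intro add_mono mult_left_mono) auto
  also have "K2 * (real n * sigma2 * m) + (K1 - K2) * m = m * (N * real b / real n) * beta"
  proof -
    have e1: "K2 * (real n * sigma2 * m) = m * (N * real b / real n) * ((real b - 1) * (real n * sigma2) / (real n - 1))"
      unfolding K2_eq using nn by (simp add: field_simps)
    have e2: "(K1 - K2) * m = m * (N * real b / real n) * ((real n - real b) / (real n - 1))"
      unfolding K12 by simp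
    have "K2 * (real n * sigma2 * m) + (K1 - K2) * m
        = m * (N * real b / real n) * ((real n - real b) / (real n - 1) + (real b - 1) * (real n * sigma2) / (real n - 1))"
      unfolding e1 e2 by (simp add: distrib_left)
    also have "(real n - real b) / (real n - 1) + (real b - 1) * (real n * sigma2) / (real n - 1) = beta"
      unfolding beta_eq by (simp add: add_divide_distrib)
    finally show ?thesis .
  qed
  also have "\<dots> \<le> real n * (N * real b / real n) * beta"
    using mn beta0 N_pos b1 by (intro mult_right_mono) auto
  also have "real n * (N * real b / real n) * beta = N * real b * beta" using nn by simp
  finally have "(\<Sum>S\<in>B. (norm (vv w S))\<^sup>2) \<le> (1 / real b)\<^sup>2 * (N * real b * beta)"
    by (simp add: mult_left_mono)
  also have "\<dots> = N * G2" unfolding G2_def beta_def using b1 by (simp add: power2_eq_square field_simps)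
  finally show ?thesis .
qed

end

lemma max0_comb:
  fixes p q s :: real
  assumes "0 \<le> s" "s \<le> 1"
  shows "max 0 ((1 - s) * p + s * q) \<le> (1 - s) * max 0 p + s * max 0 q"
proof -
  have a: "(1 - s) * p \<le> (1 - s) * max 0 p" using assms by (intro mult_left_mono) auto
  have c: "s * q \<le> s * max 0 q" using assms by (intro mult_left_mono) auto
  have "0 \<le> (1 - s) * max 0 p + s * max 0 q" using assms by (intro add_nonneg_nonneg mult_nonneg_nonneg) auto
  thus ?thesis using a c by linarith
qed

lemma sq_diff_le:
  fixes p q :: "'a::real_inner"
  shows "(norm (p - q))\<^sup>2 \<le> 2 * (norm p)\<^sup>2 + 2 * (norm q)\<^sup>2"
proof -
  have "2 * (norm p)\<^sup>2 + 2 * (norm q)\<^sup>2 - (norm (p - q))\<^sup>2 = (norm (p + q))\<^sup>2"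
    unfolding power2_norm_eq_inner
    by (simp add: inner_add_left inner_add_right inner_diff_left inner_diff_right inner_commute)
  thus ?thesis by (metis diff_ge_0_iff_ge zero_le_power2)
qed

lemma sq_sub_scale:
  fixes a g :: "'a::real_inner"
  shows "(norm (a - e *\<^sub>R g))\<^sup>2 = (norm a)\<^sup>2 - 2 * e * (g \<bullet> a) + e\<^sup>2 * (norm g)\<^sup>2"
  unfolding power2_norm_eq_inner
  by (simp add: inner_diff_left inner_diff_right inner_commute power2_eq_square algebra_simps)

context peg begin

lemma L_nonneg: "L w \<ge> 0"
  unfolding L_def by (intro mult_nonneg_nonneg sum_nonneg) auto

lemma hinge_sub: "L u \<ge> L w - gbar w \<bullet> (u - w)"
proof -
  have i: "max 0 (1 - y i * (u \<bullet> x i)) \<ge> max 0 (1 - y i * (w \<bullet> x i)) - zz w i \<bullet> (u - w)" for i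
  proof (cases "act w i")
    case True
    hence "max 0 (1 - y i * (w \<bullet> x i)) - zz w i \<bullet> (u - w) = 1 - y i * (u \<bullet> x i)"
      by (simp add: zz_def act_def inner_diff_right inner_commute algebra_simps)
    thus ?thesis by simp
  next
    case False
    thus ?thesis by (simp add: zz_def act_def)
  qed
  have "L w - gbar w \<bullet> (u - w) = (1 / real n) * (\<Sum>i<n. max 0 (1 - y i * (w \<bullet> x i)) - zz w i \<bullet> (u - w))"
    by (simp add: L_def gbar_def inner_sum_left sum_subtractf right_diff_distrib)
  also have "\<dots> \<le> L u" unfolding L_def
    by (intro mult_left_mono sum_mono i) auto
  finally show ?thesis .
qed

lemma P_comb:
  assumes "0 \<le> s" "s \<le> 1"
  shows "P ((1 - s) *\<^sub>R a + s *\<^sub>R c) \<le> (1 - s) * P a + s * P c - lam / 2 * (s * (1 - s) * (norm (a - c))\<^sup>2)"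
proof -
  have hi: "max 0 (1 - y i * (((1 - s) *\<^sub>R a + s *\<^sub>R c) \<bullet> x i))
      \<le> (1 - s) * max 0 (1 - y i * (a \<bullet> x i)) + s * max 0 (1 - y i * (c \<bullet> x i))" for i
  proof -
    have "1 - y i * (((1 - s) *\<^sub>R a + s *\<^sub>R c) \<bullet> x i) = (1 - s) * (1 - y i * (a \<bullet> x i)) + s * (1 - y i * (c \<bullet> x i))"
      by (simp add: inner_add_left algebra_simps)
    thus ?thesis using max0_comb[OF assms] by simp
  qed
  have "L ((1 - s) *\<^sub>R a + s *\<^sub>R c) \<le> (1 / real n) * (\<Sum>i<n. (1 - s) * max 0 (1 - y i * (a \<bullet> x i)) + s * max 0 (1 - y i * (c \<bullet> x i)))"
    unfolding L_def by (intro mult_left_mono sum_mono hi) auto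
  also have "\<dots> = (1 - s) * L a + s * L c"
  proof -
    define SA where "SA = (\<Sum>i<n. max 0 (1 - y i * (a \<bullet> x i)))"
    define SC where "SC = (\<Sum>i<n. max 0 (1 - y i * (c \<bullet> x i)))"
    have "(\<Sum>i<n. (1 - s) * max 0 (1 - y i * (a \<bullet> x i)) + s * max 0 (1 - y i * (c \<bullet> x i)))
        = (1 - s) * SA + s * SC"
      unfolding SA_def SC_def by (simp add: sum.distrib sum_distrib_left)
    moreover have "(1 / real n) * ((1 - s) * SA + s * SC) = (1 - s) * ((1 / real n) * SA) + s * ((1 / real n) * SC)"
      using n2 by (simp add: field_simps)
    ultimately show ?thesis unfolding L_def SA_def[symmetric] SC_def[symmetric] by simp
  qed
  finally have hL: "L ((1 - s) *\<^sub>R a + s *\<^sub>R c) \<le> (1 - s) * L a + s * L c" .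
  have hq: "lam / 2 * (norm ((1 - s) *\<^sub>R a + s *\<^sub>R c))\<^sup>2
      = (1 - s) * (lam / 2 * (norm a)\<^sup>2) + s * (lam / 2 * (norm c)\<^sup>2) - lam / 2 * (s * (1 - s) * (norm (a - c))\<^sup>2)"
    unfolding sq_comb by (simp add: field_simps)
  show ?thesis unfolding P_L using hL hq by (simp add: algebra_simps)
qed

lemma P_convex: "convex_on UNIV P"
proof (rule convex_onI)
  fix t :: real and a c :: 'a assume t: "0 < t" "t < 1"
  have "0 \<le> lam / 2 * (t * (1 - t) * (norm (a - c))\<^sup>2)" using t lam by simp
  thus "P ((1 - t) *\<^sub>R a + t *\<^sub>R c) \<le> (1 - t) * P a + t * P c"
    using P_comb[of t a c] t by linarith
qed simp

lemma P0: "P 0 = 1"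
  using n2 by (simp add: P_def svm_primal_def)

lemma P_ge: "P w \<ge> lam / 2 * (norm w)\<^sup>2"
  using L_nonneg by (simp add: P_L)

lemma P_cont: "continuous_on UNIV P"
  unfolding P_def svm_primal_def by (intro continuous_intros)

lemma minimizer: "\<exists>ws. \<forall>w. P ws \<le> P w"
proof -
  define R where "R = sqrt (2 / lam)"
  have "\<exists>ws\<in>cball 0 R. \<forall>w\<in>cball 0 R. P ws \<le> P w"
    by (intro continuous_attains_inf compact_cball continuous_on_subset[OF P_cont])
       (use lam in \<open>auto simp: R_def\<close>)
  then obtain ws where ws: "ws \<in> cball 0 R" "\<And>w. w \<in> cball 0 R \<Longrightarrow> P ws \<le> P w" by blast
  have "P ws \<le> P w" for w
  proof (cases "w \<in> cball 0 R")
    case True thus ?thesis using ws by simp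
  next
    case False
    hence "norm w > R" by simp
    hence "(norm w)\<^sup>2 > R\<^sup>2" using lam by (intro power_strict_mono) (auto simp: R_def)
    hence "(norm w)\<^sup>2 > 2 / lam" using lam by (simp add: R_def)
    hence "lam / 2 * (norm w)\<^sup>2 > lam / 2 * (2 / lam)" using lam by (intro mult_strict_left_mono) auto
    hence "lam / 2 * (norm w)\<^sup>2 > 1" using lam by simp
    moreover have "P ws \<le> P 0" using ws(2)[of 0] lam by (simp add: R_def)
    ultimately show ?thesis using P_ge[of w] P0 by linarith
  qed
  thus ?thesis by blast
qed

lemma strong_at_min:
  assumes ws: "\<forall>w. P ws \<le> P w"
  shows "P w - P ws \<ge> lam / 2 * (norm (w - ws))\<^sup>2"
proof (rule ccontr)
  define a where "a = P w - P ws"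
  define c where "c = lam / 2 * (norm (w - ws))\<^sup>2"
  assume "\<not> ?thesis"
  hence ac: "a < c" by (simp add: a_def c_def)
  have a0: "a \<ge> 0" using ws by (simp add: a_def)
  hence c0: "c > 0" using ac by simp
  define s where "s = (c - a) / (2 * c)"
  have s0: "0 < s" using ac c0 by (simp add: s_def)
  have s1: "s < 1" using a0 c0 by (simp add: s_def field_simps)
  have "P ws \<le> P ((1 - s) *\<^sub>R ws + s *\<^sub>R w)" using ws by simp
  also have "\<dots> \<le> (1 - s) * P ws + s * P w - lam / 2 * (s * (1 - s) * (norm (ws - w))\<^sup>2)"
    using s0 s1 by (intro P_comb) auto
  finally have h: "P ws \<le> (1 - s) * P ws + s * P w - lam / 2 * (s * (1 - s) * (norm (ws - w))\<^sup>2)" .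
  have e: "(1 - s) * P ws = P ws - s * P ws" by (simp add: algebra_simps)
  have X: "lam / 2 * (s * (1 - s) * (norm (ws - w))\<^sup>2) = s * ((1 - s) * c)"
    by (simp add: c_def norm_minus_commute)
  have "s * a = s * P w - s * P ws" by (simp add: a_def right_diff_distrib)
  hence "s * a \<ge> s * ((1 - s) * c)" using h e X by linarith
  hence "a \<ge> (1 - s) * c" using s0 by simp
  moreover have "(1 - s) * c = (c + a) / 2" using c0 by (simp add: s_def field_simps)
  ultimately show False using ac by simp
qed

lemma INF_P: "\<forall>w. P ws \<le> P w \<Longrightarrow> (INF w. P w) = P ws"
  by (rule cInf_eq_minimum) auto

end

lemma amgm: "l > 0 \<Longrightarrow> (a::real) * c \<le> a\<^sup>2 / (2 * l) + l * c\<^sup>2 / 2"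
proof -
  assume l: "l > 0"
  have "0 \<le> (a - l * c)\<^sup>2" by simp
  hence "2 * l * (a * c) \<le> a\<^sup>2 + l\<^sup>2 * c\<^sup>2" by (simp add: power2_eq_square algebra_simps)
  hence "a * c \<le> (a\<^sup>2 + l\<^sup>2 * c\<^sup>2) / (2 * l)" using l by (simp add: field_simps)
  also have "\<dots> = a\<^sup>2 / (2 * l) + l * c\<^sup>2 / 2" using l by (simp add: field_simps power2_eq_square)
  finally show ?thesis .
qed

context peg begin

lemma B_ne: "B \<noteq> {}" and B_fin: "finite B"
  using N_pos by (auto simp: N_def finite_batches)

lemma gbar_avg: "gbar w = (1 / real (card B)) *\<^sub>R (\<Sum>S\<in>B. vv w S)"
  using N_pos by (simp add: sum_vv N_def)

lemma gbar_sq: "(norm (gbar w))\<^sup>2 \<le> G2"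
proof -
  have "(norm (gbar w))\<^sup>2 \<le> (1 / real (card B)) * (\<Sum>S\<in>B. (norm (vv w S))\<^sup>2)"
    unfolding gbar_avg by (rule jensen_avg[OF B_fin B_ne convex_sq_norm])
  also have "\<dots> \<le> (1 / real (card B)) * (N * G2)"
    using sum_vv_sq by (intro mult_left_mono) auto
  also have "\<dots> = G2" using N_pos by (simp add: N_def)
  finally show ?thesis .
qed

lemma P_scale:
  assumes c1: "1 \<le> c" and c2: "c \<le> 1 + 1 / real T"
  shows "P (c *\<^sub>R u) \<le> P u + (1 / real T) * (G2 / (2 * lam) + 2 * lam * (norm u)\<^sup>2)"
proof -
  define g where "g = gbar (c *\<^sub>R u)"
  have "L u \<ge> L (c *\<^sub>R u) - g \<bullet> (u - c *\<^sub>R u)" unfolding g_def by (rule hinge_sub)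
  moreover have "g \<bullet> (u - c *\<^sub>R u) = (1 - c) * (g \<bullet> u)" by (simp add: inner_diff_right algebra_simps)
  ultimately have h1: "L (c *\<^sub>R u) \<le> L u + (c - 1) * ((- g) \<bullet> u)" by (simp add: algebra_simps)
  have "(- g) \<bullet> u \<le> norm g * norm u" using norm_cauchy_schwarz[of "- g" u] by simp
  also have "\<dots> \<le> (norm g)\<^sup>2 / (2 * lam) + lam * (norm u)\<^sup>2 / 2" by (rule amgm[OF lam])
  also have "\<dots> \<le> G2 / (2 * lam) + lam * (norm u)\<^sup>2 / 2"
    using gbar_sq[of "c *\<^sub>R u"] lam unfolding g_def by (intro add_right_mono divide_right_mono) auto
  finally have h2: "(- g) \<bullet> u \<le> G2 / (2 * lam) + lam * (norm u)\<^sup>2 / 2" .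
  have X0: "0 \<le> G2 / (2 * lam) + lam * (norm u)\<^sup>2 / 2" using G2_nonneg lam by simp
  have "(c - 1) * ((- g) \<bullet> u) \<le> (c - 1) * (G2 / (2 * lam) + lam * (norm u)\<^sup>2 / 2)"
    using c1 h2 by (intro mult_left_mono) auto
  also have "\<dots> \<le> (1 / real T) * (G2 / (2 * lam) + lam * (norm u)\<^sup>2 / 2)"
    using c2 X0 by (intro mult_right_mono) auto
  finally have hL: "L (c *\<^sub>R u) \<le> L u + (1 / real T) * (G2 / (2 * lam) + lam * (norm u)\<^sup>2 / 2)"
    using h1 by linarith
  have Tpos: "real T \<ge> 1" using T1 by simp
  have "c\<^sup>2 - 1 = (c - 1) * (c + 1)" by (simp add: power2_eq_square algebra_simps)
  also have "\<dots> \<le> (1 / real T) * (2 + 1 / real T)"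
    using c1 c2 by (intro mult_mono) auto
  also have "\<dots> \<le> (1 / real T) * 3"
    using Tpos by (intro mult_left_mono) (auto simp: field_simps)
  finally have hc: "c\<^sup>2 \<le> 1 + 3 / real T" by simp
  have "lam / 2 * (norm (c *\<^sub>R u))\<^sup>2 = lam / 2 * c\<^sup>2 * (norm u)\<^sup>2"
    using c1 by (simp add: power_mult_distrib)
  also have "\<dots> \<le> lam / 2 * (1 + 3 / real T) * (norm u)\<^sup>2"
    using hc lam by (intro mult_right_mono mult_left_mono) auto
  also have "\<dots> = lam / 2 * (norm u)\<^sup>2 + (1 / real T) * (3 * lam / 2 * (norm u)\<^sup>2)"
    by (simp add: field_simps)
  finally have hq: "lam / 2 * (norm (c *\<^sub>R u))\<^sup>2 \<le> lam / 2 * (norm u)\<^sup>2 + (1 / real T) * (3 * lam / 2 * (norm u)\<^sup>2)" .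
  have "P (c *\<^sub>R u) \<le> L u + lam / 2 * (norm u)\<^sup>2
      + ((1 / real T) * (G2 / (2 * lam) + lam * (norm u)\<^sup>2 / 2) + (1 / real T) * (3 * lam / 2 * (norm u)\<^sup>2))"
    unfolding P_L using hL hq by linarith
  also have "(1 / real T) * (G2 / (2 * lam) + lam * (norm u)\<^sup>2 / 2) + (1 / real T) * (3 * lam / 2 * (norm u)\<^sup>2)
      = (1 / real T) * (G2 / (2 * lam) + 2 * lam * (norm u)\<^sup>2)"
    using T1 lam by (simp add: field_simps)
  finally show ?thesis unfolding P_L by simp
qed

definition "wn t w S = (1 - 1 / real t) *\<^sub>R w + (1 / (lam * real t)) *\<^sub>R vv w S"

lemma R2:
  assumes t: "t \<ge> 1"
  shows "(\<Sum>S\<in>B. (norm (lam *\<^sub>R wn t w S))\<^sup>2) \<le> N * ((1 - 1 / real t) * (norm (lam *\<^sub>R w))\<^sup>2 + G2 / real t)"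
proof -
  define s where "s = 1 / real t"
  have s0: "0 \<le> s" and s1: "s \<le> 1" using t by (auto simp: s_def)
  have pw: "(norm (lam *\<^sub>R wn t w S))\<^sup>2 \<le> (1 - s) * (norm (lam *\<^sub>R w))\<^sup>2 + s * (norm (vv w S))\<^sup>2" for S
  proof -
    have c: "lam * (1 / (lam * real t)) = s" using lam by (simp add: s_def)
    have "lam *\<^sub>R wn t w S = lam *\<^sub>R ((1 - s) *\<^sub>R w) + lam *\<^sub>R ((1 / (lam * real t)) *\<^sub>R vv w S)"
      by (simp add: wn_def s_def scaleR_add_right)
    also have "\<dots> = (1 - s) *\<^sub>R (lam *\<^sub>R w) + s *\<^sub>R vv w S"
      by (simp only: scaleR_scaleR c mult.commute)
    finally have "lam *\<^sub>R wn t w S = (1 - s) *\<^sub>R (lam *\<^sub>R w) + s *\<^sub>R vv w S" .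
    hence "(norm (lam *\<^sub>R wn t w S))\<^sup>2 = (1 - s) * (norm (lam *\<^sub>R w))\<^sup>2 + s * (norm (vv w S))\<^sup>2
             - s * (1 - s) * (norm (lam *\<^sub>R w - vv w S))\<^sup>2"
      by (simp only: sq_comb)
    moreover have "0 \<le> s * (1 - s) * (norm (lam *\<^sub>R w - vv w S))\<^sup>2" using s0 s1 by simp
    ultimately show ?thesis by linarith
  qed
  have "(\<Sum>S\<in>B. (norm (lam *\<^sub>R wn t w S))\<^sup>2) \<le> (\<Sum>S\<in>B. (1 - s) * (norm (lam *\<^sub>R w))\<^sup>2 + s * (norm (vv w S))\<^sup>2)"
    by (intro sum_mono pw)
  also have "\<dots> = N * ((1 - s) * (norm (lam *\<^sub>R w))\<^sup>2) + s * (\<Sum>S\<in>B. (norm (vv w S))\<^sup>2)"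
    by (simp add: sum.distrib sum_distrib_left N_def)
  also have "\<dots> \<le> N * ((1 - s) * (norm (lam *\<^sub>R w))\<^sup>2) + s * (N * G2)"
    using sum_vv_sq s0 by (intro add_left_mono mult_left_mono) auto
  also have "\<dots> = N * ((1 - 1 / real t) * (norm (lam *\<^sub>R w))\<^sup>2 + G2 / real t)"
    by (simp add: s_def algebra_simps)
  finally show ?thesis .
qed

lemma key_ineq: "lam * (w \<bullet> (w - u)) - gbar w \<bullet> (w - u) \<ge> P w - P u + lam / 2 * (norm (w - u))\<^sup>2"
proof -
  have h: "gbar w \<bullet> (w - u) \<le> L u - L w"
    using hinge_sub[where u=u and w=w] by (simp add: inner_diff_right)
  have e: "lam * (w \<bullet> (w - u)) = lam / 2 * (norm w)\<^sup>2 - lam / 2 * (norm u)\<^sup>2 + lam / 2 * (norm (w - u))\<^sup>2"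
    unfolding power2_norm_eq_inner
    by (simp add: inner_diff_left inner_diff_right inner_commute field_simps)
  show ?thesis unfolding P_L using h e by linarith
qed

lemma R1:
  assumes t: "t \<ge> 1"
  shows "(\<Sum>S\<in>B. (norm (wn t w S - u))\<^sup>2)
    \<le> N * ((1 - 1 / real t) * (norm (w - u))\<^sup>2 - (2 / (lam * real t)) * (P w - P u)
           + (2 * (norm (lam *\<^sub>R w))\<^sup>2 + 2 * G2) / (lam\<^sup>2 * (real t)\<^sup>2))"
proof -
  define e where "e = 1 / (lam * real t)"
  define a where "a = w - u"
  have e0: "e > 0" using lam t by (simp add: e_def)
  have el: "e * lam = 1 / real t" using lam by (simp add: e_def)
  have pw: "(norm (wn t w S - u))\<^sup>2 = (norm a)\<^sup>2 - 2 * e * (lam * (w \<bullet> a)) + 2 * e * (vv w S \<bullet> a)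
        + e\<^sup>2 * (norm (lam *\<^sub>R w - vv w S))\<^sup>2" for S
  proof -
    have eq: "wn t w S - u = a - e *\<^sub>R (lam *\<^sub>R w - vv w S)"
      using lam t by (simp add: wn_def a_def e_def algebra_simps)
    have gd: "(lam *\<^sub>R w - vv w S) \<bullet> a = lam * (w \<bullet> a) - vv w S \<bullet> a"
      by (simp add: inner_diff_left)
    show ?thesis unfolding eq sq_sub_scale gd by (simp add: algebra_simps)
  qed
  have sumv: "(\<Sum>S\<in>B. vv w S \<bullet> a) = N * (gbar w \<bullet> a)"
    by (simp add: inner_sum_left[symmetric] sum_vv)
  have sumg: "(\<Sum>S\<in>B. (norm (lam *\<^sub>R w - vv w S))\<^sup>2) \<le> N * (2 * (norm (lam *\<^sub>R w))\<^sup>2 + 2 * G2)"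
  proof -
    have "(\<Sum>S\<in>B. (norm (lam *\<^sub>R w - vv w S))\<^sup>2) \<le> (\<Sum>S\<in>B. 2 * (norm (lam *\<^sub>R w))\<^sup>2 + 2 * (norm (vv w S))\<^sup>2)"
      by (intro sum_mono sq_diff_le)
    also have "\<dots> = N * (2 * (norm (lam *\<^sub>R w))\<^sup>2) + 2 * (\<Sum>S\<in>B. (norm (vv w S))\<^sup>2)"
      by (simp add: sum.distrib sum_distrib_left N_def)
    also have "\<dots> \<le> N * (2 * (norm (lam *\<^sub>R w))\<^sup>2) + 2 * (N * G2)"
      using sum_vv_sq by simp
    finally show ?thesis by (simp add: algebra_simps)
  qed
  have "(\<Sum>S\<in>B. (norm (wn t w S - u))\<^sup>2)
      = N * (norm a)\<^sup>2 - 2 * e * (N * (lam * (w \<bullet> a) - gbar w \<bullet> a))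
        + e\<^sup>2 * (\<Sum>S\<in>B. (norm (lam *\<^sub>R w - vv w S))\<^sup>2)"
    by (simp add: pw sum.distrib sum_subtractf sum_distrib_left[symmetric] sumv N_def algebra_simps)
  also have "\<dots> \<le> N * (norm a)\<^sup>2 - 2 * e * (N * (P w - P u + lam / 2 * (norm a)\<^sup>2))
        + e\<^sup>2 * (N * (2 * (norm (lam *\<^sub>R w))\<^sup>2 + 2 * G2))"
  proof -
    have "N * (P w - P u + lam / 2 * (norm a)\<^sup>2) \<le> N * (lam * (w \<bullet> a) - gbar w \<bullet> a)"
      using key_ineq[of w u] N_pos unfolding a_def by (intro mult_left_mono) auto
    hence "2 * e * (N * (P w - P u + lam / 2 * (norm a)\<^sup>2)) \<le> 2 * e * (N * (lam * (w \<bullet> a) - gbar w \<bullet> a))"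
      by (rule mult_left_mono) (use e0 in auto)
    moreover have "e\<^sup>2 * (\<Sum>S\<in>B. (norm (lam *\<^sub>R w - vv w S))\<^sup>2) \<le> e\<^sup>2 * (N * (2 * (norm (lam *\<^sub>R w))\<^sup>2 + 2 * G2))"
      using sumg by (intro mult_left_mono) auto
    ultimately show ?thesis by linarith
  qed
  also have "\<dots> = N * ((1 - e * lam) * (norm a)\<^sup>2 - 2 * e * (P w - P u) + e\<^sup>2 * (2 * (norm (lam *\<^sub>R w))\<^sup>2 + 2 * G2))"
    by (simp add: algebra_simps)
  also have "\<dots> = N * ((1 - 1 / real t) * (norm (w - u))\<^sup>2 - (2 / (lam * real t)) * (P w - P u)
           + (2 * (norm (lam *\<^sub>R w))\<^sup>2 + 2 * G2) / (lam\<^sup>2 * (real t)\<^sup>2))"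
    using lam by (simp add: el a_def e_def power2_eq_square field_simps)
  finally show ?thesis .
qed

end

context peg begin

definition "ww t A = pegasos_w x y lam b A t"
definition "M = batch_seq_pmf n b T"
definition EE :: "((nat \<Rightarrow> nat set) \<Rightarrow> real) \<Rightarrow> real" where "EE f = measure_pmf.expectation M f"

lemma finM: "finite (set_pmf M)"
  unfolding M_def batch_seq_pmf_def
  using B_fin B_ne by (subst set_Pi_pmf) (auto intro!: finite_PiE_dflt)

lemma integ: "integrable (measure_pmf M) (f :: (nat \<Rightarrow> nat set) \<Rightarrow> real)"
  by (rule integrable_measure_pmf_finite[OF finM])

lemma EE_add: "EE (\<lambda>A. f A + g A) = EE f + EE g"
  unfolding EE_def by (simp add: integ)
lemma EE_diff: "EE (\<lambda>A. f A - g A) = EE f - EE g"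
  unfolding EE_def by (simp add: integ)
lemma EE_cmult: "EE (\<lambda>A. c * f A) = c * EE f"
  unfolding EE_def by simp
lemma EE_const: "EE (\<lambda>A. c) = c"
  unfolding EE_def by simp
lemma EE_sum: "EE (\<lambda>A. \<Sum>t\<in>I. f t A) = (\<Sum>t\<in>I. EE (f t))"
  unfolding EE_def by (simp add: integ)
lemma EE_mono: "(\<And>A. f A \<le> g A) \<Longrightarrow> EE f \<le> EE g"
  unfolding EE_def by (intro integral_mono integ)
lemma EE_nonneg: "(\<And>A. 0 \<le> f A) \<Longrightarrow> 0 \<le> EE f"
  using EE_mono[of "\<lambda>_. 0" f] by (simp add: EE_const)

lemma ww1: "ww (Suc 0) A = 0" by (simp add: ww_def)

lemma ww_step: "t \<ge> 1 \<Longrightarrow> ww (Suc t) A = wn t (ww t A) (A t)"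
proof -
  assume t: "t \<ge> 1"
  have c1: "1 - 1 / (lam * real t) * lam = 1 - 1 / real t" using lam by simp
  have c2: "(1 / (lam * real t) / real b) *\<^sub>R v = (1 / (lam * real t)) *\<^sub>R ((1 / real b) *\<^sub>R v)" for v :: 'a
    by simp
  show ?thesis using t lam unfolding ww_def wn_def vv_def
    by (simp add: Let_def c1)
qed

lemma ww_local: "s \<ge> t \<Longrightarrow> ww t (A(s := S)) = ww t A"
proof (induction t)
  case 0 thus ?case by (simp add: ww_def)
next
  case (Suc t)
  have st: "t \<le> s" "s \<noteq> t" using Suc.prems by auto
  have ih: "ww t (A(s := S)) = ww t A" by (rule Suc.IH[OF st(1)])
  have at: "(A(s := S)) t = A t" using st by simp
  show ?case using ih at unfolding ww_def by (simp add: Let_def del: fun_upd_apply)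
qed

lemma cond:
  assumes t: "t \<in> {1..T}"
  shows "EE (\<lambda>A. h (ww t A) (A t)) = EE (\<lambda>A. (1 / N) * (\<Sum>S\<in>B. h (ww t A) S))"
proof -
  have fin: "finite (set_pmf (pmf_of_set B))" using B_fin B_ne by simp
  have "EE (\<lambda>A. h (ww t A) (A t))
      = EE (\<lambda>A. measure_pmf.expectation (pmf_of_set B) (\<lambda>s. h (ww t (A(t := s))) ((A(t := s)) t)))"
    unfolding EE_def M_def batch_seq_pmf_def
    by (rule resample[where F = "\<lambda>A. h (ww t A) (A t)"]) (use t fin in auto)
  also have "\<dots> = EE (\<lambda>A. (1 / N) * (\<Sum>S\<in>B. h (ww t A) S))"
    using B_fin B_ne by (simp add: ww_local integral_pmf_of_set N_def)
  finally show ?thesis .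
qed

end

context peg begin

definition "ws = (SOME ws. \<forall>w. P ws \<le> P w)"
lemma ws_min: "\<forall>w. P ws \<le> P w"
  unfolding ws_def using minimizer by (rule someI_ex)

definition "D t = EE (\<lambda>A. (norm (ww t A - ws))\<^sup>2)"
definition "Q t = EE (\<lambda>A. (norm (lam *\<^sub>R ww t A))\<^sup>2)"
definition "EP t = EE (\<lambda>A. P (ww t A))"

lemma D_nonneg: "D t \<ge> 0" unfolding D_def by (rule EE_nonneg) simp

lemma Q_rec:
  assumes t: "t \<in> {1..T}"
  shows "Q (Suc t) \<le> (1 - 1 / real t) * Q t + G2 / real t"
proof -
  have "Q (Suc t) = EE (\<lambda>A. (norm (lam *\<^sub>R wn t (ww t A) (A t)))\<^sup>2)"
    using t by (simp add: Q_def ww_step)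
  also have "\<dots> = EE (\<lambda>A. (1 / N) * (\<Sum>S\<in>B. (norm (lam *\<^sub>R wn t (ww t A) S))\<^sup>2))"
    by (rule cond[OF t, where h = "\<lambda>w S. (norm (lam *\<^sub>R wn t w S))\<^sup>2"])
  also have "\<dots> \<le> EE (\<lambda>A. (1 - 1 / real t) * (norm (lam *\<^sub>R ww t A))\<^sup>2 + G2 / real t)"
  proof (rule EE_mono)
    fix A
    have "(\<Sum>S\<in>B. (norm (lam *\<^sub>R wn t (ww t A) S))\<^sup>2)
        \<le> N * ((1 - 1 / real t) * (norm (lam *\<^sub>R ww t A))\<^sup>2 + G2 / real t)"
      using t by (intro R2) auto
    thus "(1 / N) * (\<Sum>S\<in>B. (norm (lam *\<^sub>R wn t (ww t A) S))\<^sup>2)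
        \<le> (1 - 1 / real t) * (norm (lam *\<^sub>R ww t A))\<^sup>2 + G2 / real t"
      using N_pos by (simp add: field_simps)
  qed
  also have "\<dots> = (1 - 1 / real t) * Q t + G2 / real t"
    by (simp add: EE_add EE_cmult EE_const Q_def)
  finally show ?thesis .
qed

lemma Q_bound: "1 \<le> t \<Longrightarrow> t \<le> Suc T \<Longrightarrow> Q t \<le> G2"
proof (induction t rule: dec_induct)
  case base
  thus ?case using G2_nonneg by (simp add: Q_def ww1 EE_const)
next
  case (step t)
  hence t: "t \<in> {1..T}" by auto
  have "Q (Suc t) \<le> (1 - 1 / real t) * Q t + G2 / real t" by (rule Q_rec[OF t])
  also have "\<dots> \<le> (1 - 1 / real t) * G2 + G2 / real t"
    using step t by (intro add_right_mono mult_left_mono) auto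
  also have "\<dots> = G2" using t by (simp add: field_simps)
  finally show ?case .
qed

lemma D_rec:
  assumes t: "t \<in> {1..T}"
  shows "D (Suc t) \<le> (1 - 1 / real t) * D t - (2 / (lam * real t)) * (EP t - P ws)
           + (2 * Q t + 2 * G2) / (lam\<^sup>2 * (real t)\<^sup>2)"
proof -
  have "D (Suc t) = EE (\<lambda>A. (norm (wn t (ww t A) (A t) - ws))\<^sup>2)"
    using t by (simp add: D_def ww_step)
  also have "\<dots> = EE (\<lambda>A. (1 / N) * (\<Sum>S\<in>B. (norm (wn t (ww t A) S - ws))\<^sup>2))"
    by (rule cond[OF t, where h = "\<lambda>w S. (norm (wn t w S - ws))\<^sup>2"])
  also have "\<dots> \<le> EE (\<lambda>A. (1 - 1 / real t) * (norm (ww t A - ws))\<^sup>2 - (2 / (lam * real t)) * (P (ww t A) - P ws)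
           + (2 * (norm (lam *\<^sub>R ww t A))\<^sup>2 + 2 * G2) / (lam\<^sup>2 * (real t)\<^sup>2))"
  proof (rule EE_mono)
    fix A
    have "(\<Sum>S\<in>B. (norm (wn t (ww t A) S - ws))\<^sup>2)
        \<le> N * ((1 - 1 / real t) * (norm (ww t A - ws))\<^sup>2 - (2 / (lam * real t)) * (P (ww t A) - P ws)
           + (2 * (norm (lam *\<^sub>R ww t A))\<^sup>2 + 2 * G2) / (lam\<^sup>2 * (real t)\<^sup>2))"
      using t by (intro R1) auto
    thus "(1 / N) * (\<Sum>S\<in>B. (norm (wn t (ww t A) S - ws))\<^sup>2)
        \<le> (1 - 1 / real t) * (norm (ww t A - ws))\<^sup>2 - (2 / (lam * real t)) * (P (ww t A) - P ws)
           + (2 * (norm (lam *\<^sub>R ww t A))\<^sup>2 + 2 * G2) / (lam\<^sup>2 * (real t)\<^sup>2)"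
      using N_pos by (simp add: field_simps)
  qed
  also have "\<dots> = (1 - 1 / real t) * D t - (2 / (lam * real t)) * (EP t - P ws)
           + (2 * Q t + 2 * G2) / (lam\<^sup>2 * (real t)\<^sup>2)"
  proof -
    have e: "(\<lambda>A. (1 - 1 / real t) * (norm (ww t A - ws))\<^sup>2 - (2 / (lam * real t)) * (P (ww t A) - P ws)
           + (2 * (norm (lam *\<^sub>R ww t A))\<^sup>2 + 2 * G2) / (lam\<^sup>2 * (real t)\<^sup>2))
        = (\<lambda>A. ((1 - 1 / real t) * (norm (ww t A - ws))\<^sup>2 - (2 / (lam * real t)) * P (ww t A))
            + ((2 / (lam\<^sup>2 * (real t)\<^sup>2)) * (norm (lam *\<^sub>R ww t A))\<^sup>2
            + ((2 / (lam * real t)) * P ws + 2 * G2 / (lam\<^sup>2 * (real t)\<^sup>2))))"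
      by (rule ext) (use t lam in \<open>simp add: field_simps\<close>)
    show ?thesis unfolding e EE_add EE_diff EE_cmult EE_const D_def[symmetric] Q_def[symmetric] EP_def[symmetric]
      using t lam by (simp add: field_simps)
  qed
  finally show ?thesis .
qed

lemma EP_strong: "EP t - P ws \<ge> lam / 2 * D t"
proof -
  have "lam / 2 * D t = EE (\<lambda>A. lam / 2 * (norm (ww t A - ws))\<^sup>2)" by (simp only: D_def EE_cmult)
  also have "\<dots> \<le> EE (\<lambda>A. P (ww t A) - P ws)"
    using strong_at_min[OF ws_min] by (intro EE_mono) simp
  also have "\<dots> = EP t - P ws" by (simp add: EE_diff EE_const EP_def)
  finally show ?thesis .
qed

lemma D_rec2:
  assumes t: "t \<in> {1..T}"
  shows "D (Suc t) \<le> (1 - 2 / real t) * D t + 4 * G2 / (lam\<^sup>2 * (real t)\<^sup>2)"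
proof -
  have t1: "real t \<ge> 1" using t by simp
  have a: "(2 / (lam * real t)) * (lam / 2 * D t) \<le> (2 / (lam * real t)) * (EP t - P ws)"
    using EP_strong lam t1 by (intro mult_left_mono) auto
  have a': "(2 / (lam * real t)) * (lam / 2 * D t) = (1 / real t) * D t" using lam t1 by simp
  have q: "(2 * Q t + 2 * G2) / (lam\<^sup>2 * (real t)\<^sup>2) \<le> (2 * G2 + 2 * G2) / (lam\<^sup>2 * (real t)\<^sup>2)"
    using Q_bound[of t] t lam t1 by (intro divide_right_mono) auto
  have "D (Suc t) \<le> (1 - 1 / real t) * D t - (1 / real t) * D t + (2 * G2 + 2 * G2) / (lam\<^sup>2 * (real t)\<^sup>2)"
    using D_rec[OF t] a a' q by linarith
  also have "\<dots> = (1 - 2 / real t) * D t + 4 * G2 / (lam\<^sup>2 * (real t)\<^sup>2)"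
    by (simp add: algebra_simps)
  finally show ?thesis .
qed

lemma ratio_ineq: "(t::real) \<ge> 2 \<Longrightarrow> (1 - 2 / t) * (8 / t) + 4 / t\<^sup>2 \<le> 8 / (t + 1)"
proof -
  assume t: "t \<ge> 2"
  have "(1 - 2 / t) * (8 / t) + 4 / t\<^sup>2 = (8 * t - 12) / t\<^sup>2" using t by (simp add: field_simps power2_eq_square)
  also have "\<dots> \<le> 8 / (t + 1)" using t by (simp add: field_simps power2_eq_square)
  finally show ?thesis .
qed

lemma D_bound: "2 \<le> t \<Longrightarrow> t \<le> Suc T \<Longrightarrow> D t \<le> 8 * G2 / (lam\<^sup>2 * real t)"
proof (induction t rule: dec_induct)
  case base
  have t: "1 \<in> {1..T}" using T1 by simp
  have "D (Suc 1) \<le> (1 - 2 / real 1) * D 1 + 4 * G2 / (lam\<^sup>2 * (real 1)\<^sup>2)" by (rule D_rec2[OF t])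
  also have "\<dots> \<le> 4 * G2 / lam\<^sup>2" using D_nonneg[of 1] by simp
  finally show ?case by (simp add: numeral_2_eq_2)
next
  case (step t)
  hence t: "t \<in> {1..T}" and t2: "real t \<ge> 2" by auto
  define a where "a = G2 / lam\<^sup>2"
  have a0: "a \<ge> 0" using G2_nonneg by (simp add: a_def)
  have "D (Suc t) \<le> (1 - 2 / real t) * D t + 4 * G2 / (lam\<^sup>2 * (real t)\<^sup>2)" by (rule D_rec2[OF t])
  also have "\<dots> \<le> (1 - 2 / real t) * (8 * G2 / (lam\<^sup>2 * real t)) + 4 * G2 / (lam\<^sup>2 * (real t)\<^sup>2)"
    using step t2 by (intro add_right_mono mult_left_mono) (auto simp: field_simps)
  also have "\<dots> = a * ((1 - 2 / real t) * (8 / real t) + 4 / (real t)\<^sup>2)"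
    using t2 lam by (simp add: a_def field_simps)
  also have "\<dots> \<le> a * (8 / (real t + 1))"
    using ratio_ineq[OF t2] a0 by (intro mult_left_mono) auto
  also have "\<dots> = 8 * G2 / (lam\<^sup>2 * real (Suc t))" using t2 lam by (simp add: a_def field_simps)
  finally show ?case .
qed

lemma EP_term:
  assumes t: "t \<in> {1..T}"
  shows "EP t - P ws \<le> lam / 2 * ((real t - 1) * D t - real t * D (Suc t)) + 2 * G2 / (lam * real t)"
proof -
  have t1: "real t \<ge> 1" using t by simp
  have q: "(2 * Q t + 2 * G2) / (lam\<^sup>2 * (real t)\<^sup>2) \<le> (2 * G2 + 2 * G2) / (lam\<^sup>2 * (real t)\<^sup>2)"
    using Q_bound[of t] t lam t1 by (intro divide_right_mono) auto
  have h: "(2 / (lam * real t)) * (EP t - P ws) \<le> (1 - 1 / real t) * D t - D (Suc t) + 4 * G2 / (lam\<^sup>2 * (real t)\<^sup>2)"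
    using D_rec[OF t] q by (simp add: algebra_simps) 
  have c: "lam * real t / 2 > 0" using lam t1 by simp
  have "EP t - P ws = (lam * real t / 2) * ((2 / (lam * real t)) * (EP t - P ws))" using lam t1 by simp
  also have "\<dots> \<le> (lam * real t / 2) * ((1 - 1 / real t) * D t - D (Suc t) + 4 * G2 / (lam\<^sup>2 * (real t)\<^sup>2))"
    using h c by (intro mult_left_mono) auto
  also have "\<dots> = lam / 2 * ((real t - 1) * D t - real t * D (Suc t)) + 2 * G2 / (lam * real t)"
    using lam t1 by (simp add: field_simps power2_eq_square)
  finally show ?thesis .
qed

end

context peg begin

abbreviation "kk \<equiv> T div 2"

lemma tele:
  assumes "kk \<le> s" "s \<le> T"
  shows "(\<Sum>t\<in>{Suc kk..s}. EP t - P ws)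
    \<le> lam / 2 * (real kk * D (Suc kk) - real s * D (Suc s)) + (2 * G2 / lam) * ((real s - real kk) / (real kk + 1))"
  using assms
proof (induction s rule: dec_induct)
  case base thus ?case by simp
next
  case (step s)
  have t: "Suc s \<in> {1..T}" using step by auto
  have A: "(\<Sum>t\<in>{Suc kk..Suc s}. EP t - P ws) = (\<Sum>t\<in>{Suc kk..s}. EP t - P ws) + (EP (Suc s) - P ws)"
    using step by (simp add: sum.cl_ivl_Suc)
  have IH: "(\<Sum>t\<in>{Suc kk..s}. EP t - P ws)
    \<le> lam / 2 * (real kk * D (Suc kk) - real s * D (Suc s)) + (2 * G2 / lam) * ((real s - real kk) / (real kk + 1))"
    using step by simp
  have Tm: "EP (Suc s) - P ws \<le> lam / 2 * (real s * D (Suc s) - real (Suc s) * D (Suc (Suc s))) + 2 * G2 / (lam * real (Suc s))"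
    using EP_term[OF t] by simp
  have G: "2 * G2 / (lam * real (Suc s)) \<le> (2 * G2 / lam) * (1 / (real kk + 1))"
  proof -
    have "2 * G2 / (lam * real (Suc s)) = (2 * G2 / lam) * (1 / real (Suc s))" by simp
    also have "\<dots> \<le> (2 * G2 / lam) * (1 / (real kk + 1))"
      using step G2_nonneg lam by (intro mult_left_mono divide_left_mono) auto
    finally show ?thesis .
  qed
  have eq1: "lam / 2 * (real kk * D (Suc kk) - real s * D (Suc s)) + lam / 2 * (real s * D (Suc s) - real (Suc s) * D (Suc (Suc s)))
      = lam / 2 * (real kk * D (Suc kk) - real (Suc s) * D (Suc (Suc s)))"
    by (simp add: algebra_simps)
  have eq2: "(2 * G2 / lam) * ((real s - real kk) / (real kk + 1)) + (2 * G2 / lam) * (1 / (real kk + 1))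
      = (2 * G2 / lam) * ((real (Suc s) - real kk) / (real kk + 1))"
  proof -
    have x: "real (Suc s) - real kk = (real s - real kk) + 1" by simp
    show ?thesis by (simp only: x add_divide_distrib distrib_left)
  qed
  show ?case using A IH Tm G eq1 eq2 by linarith
qed

lemma kkT: "2 * real kk \<le> real T" "real T \<le> 2 * real kk + 1"
proof -
  have "2 * kk \<le> T" "T \<le> 2 * kk + 1" by presburger+
  hence "real (2 * kk) \<le> real T" "real T \<le> real (2 * kk + 1)" by (simp_all only: of_nat_le_iff)
  thus "2 * real kk \<le> real T" "real T \<le> 2 * real kk + 1" by simp_all
qed

lemma sum_EP: "(\<Sum>t\<in>{Suc kk..T}. EP t - P ws) \<le> 6 * G2 / lam"
proof -
  have h: "(\<Sum>t\<in>{Suc kk..T}. EP t - P ws)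
    \<le> lam / 2 * (real kk * D (Suc kk) - real T * D (Suc T)) + (2 * G2 / lam) * ((real T - real kk) / (real kk + 1))"
    by (rule tele) auto
  have g0: "2 * G2 / lam \<ge> 0" using G2_nonneg lam by simp
  have r1: "(real T - real kk) / (real kk + 1) \<le> 1" using kkT by (simp add: field_simps)
  have p2: "(2 * G2 / lam) * ((real T - real kk) / (real kk + 1)) \<le> 2 * G2 / lam"
    using mult_left_mono[OF r1 g0] by simp
  have dT: "real T * D (Suc T) \<ge> 0" using D_nonneg by simp
  have p1: "lam / 2 * (real kk * D (Suc kk)) \<le> 4 * G2 / lam"
  proof (cases "kk = 0")
    case True thus ?thesis using G2_nonneg lam by simp
  next
    case False
    hence k2: "2 \<le> Suc kk" by simp
    have "D (Suc kk) \<le> 8 * G2 / (lam\<^sup>2 * real (Suc kk))" by (rule D_bound[OF k2]) auto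
    hence "lam / 2 * (real kk * D (Suc kk)) \<le> lam / 2 * (real kk * (8 * G2 / (lam\<^sup>2 * real (Suc kk))))"
      using lam by (intro mult_left_mono) auto
    also have "\<dots> = (4 * G2 / lam) * (real kk / real (Suc kk))"
    proof -
      have nz1: "lam + lam * real kk \<noteq> 0" using lam by (intro order.strict_implies_not_eq[symmetric] add_pos_nonneg mult_nonneg_nonneg) auto
      have nz2: "lam * lam + lam * (lam * real kk) \<noteq> 0" using lam by (intro order.strict_implies_not_eq[symmetric] add_pos_nonneg mult_nonneg_nonneg) auto
      show ?thesis using lam nz1 nz2 by (simp add: field_simps power2_eq_square)
    qed
    also have "\<dots> \<le> (4 * G2 / lam) * 1"
      using G2_nonneg lam by (intro mult_left_mono) auto
    finally show ?thesis by simp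
  qed
  have "lam / 2 * (real kk * D (Suc kk) - real T * D (Suc T)) \<le> lam / 2 * (real kk * D (Suc kk))"
    using dT lam by (intro mult_left_mono) auto
  thus ?thesis using h p1 p2 by linarith
qed

definition "mm = real (card {Suc kk..T})"
definition "ub A = (1 / mm) *\<^sub>R (\<Sum>t\<in>{Suc kk..T}. ww t A)"

lemma mm_eq: "mm = real T - real kk" by (simp add: mm_def)
lemma I_ne: "{Suc kk..T} \<noteq> {}" using T1 by simp
lemma mm_pos: "mm > 0" using I_ne by (simp add: mm_def card_gt_0_iff)
lemma mm_ge: "1 / mm \<le> 2 / real T"
proof -
  have aux: "\<And>a c :: real. 2 * a \<le> c \<Longrightarrow> c \<le> 2 * (c - a)" by (simp add: algebra_simps)
  have "2 * mm \<ge> real T" unfolding mm_eq using aux[OF kkT(1)] by simp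
  thus ?thesis using mm_pos T1 by (simp add: field_simps)
qed

lemma avg_eq: "pegasos_avg x y lam b T A = (2 * mm / real T) *\<^sub>R ub A"
  using mm_pos by (simp add: pegasos_avg_def ub_def ww_def)

lemma pt_bound:
  "P (pegasos_avg x y lam b T A) \<le> (1 / mm) * (\<Sum>t\<in>{Suc kk..T}. P (ww t A))
     + (1 / real T) * (G2 / (2 * lam) + (2 / lam) * ((1 / mm) * (\<Sum>t\<in>{Suc kk..T}. (norm (lam *\<^sub>R ww t A))\<^sup>2)))"
proof -
  have Tp: "real T > 0" using T1 by simp
  have c1: "1 \<le> 2 * mm / real T" using mm_eq kkT Tp by (simp add: le_divide_eq)
  have "2 * mm \<le> real T + 1" using mm_eq kkT by linarith
  hence "2 * mm / real T \<le> (real T + 1) / real T" using Tp by (intro divide_right_mono) auto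
  also have "(real T + 1) / real T = 1 + 1 / real T" using Tp by (simp add: field_simps)
  finally have c2: "2 * mm / real T \<le> 1 + 1 / real T" .
  have cm: "real (card {Suc kk..T}) = mm" by (simp add: mm_def)
  have j1: "P (ub A) \<le> (1 / mm) * (\<Sum>t\<in>{Suc kk..T}. P (ww t A))"
    unfolding ub_def cm[symmetric] by (rule jensen_avg[OF _ I_ne P_convex]) simp
  have "lam *\<^sub>R ub A = (1 / mm) *\<^sub>R (\<Sum>t\<in>{Suc kk..T}. lam *\<^sub>R ww t A)"
    by (simp add: ub_def scaleR_sum_right)
  hence "(norm (lam *\<^sub>R ub A))\<^sup>2 \<le> (1 / mm) * (\<Sum>t\<in>{Suc kk..T}. (norm (lam *\<^sub>R ww t A))\<^sup>2)"
    unfolding cm[symmetric] by (simp only:) (rule jensen_avg[OF _ I_ne convex_sq_norm], simp)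
  hence j2': "(2 / lam) * (norm (lam *\<^sub>R ub A))\<^sup>2 \<le> (2 / lam) * ((1 / mm) * (\<Sum>t\<in>{Suc kk..T}. (norm (lam *\<^sub>R ww t A))\<^sup>2))"
    using lam by (intro mult_left_mono) auto
  have "(2 / lam) * (norm (lam *\<^sub>R ub A))\<^sup>2 = 2 * lam * (norm (ub A))\<^sup>2"
    using lam by (simp add: power_mult_distrib power2_eq_square)
  hence j2: "2 * lam * (norm (ub A))\<^sup>2 \<le> (2 / lam) * ((1 / mm) * (\<Sum>t\<in>{Suc kk..T}. (norm (lam *\<^sub>R ww t A))\<^sup>2))"
    using j2' by simp
  have "P (pegasos_avg x y lam b T A) \<le> P (ub A) + (1 / real T) * (G2 / (2 * lam) + 2 * lam * (norm (ub A))\<^sup>2)"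
    unfolding avg_eq by (rule P_scale[OF c1 c2])
  also have "\<dots> \<le> (1 / mm) * (\<Sum>t\<in>{Suc kk..T}. P (ww t A))
     + (1 / real T) * (G2 / (2 * lam) + (2 / lam) * ((1 / mm) * (\<Sum>t\<in>{Suc kk..T}. (norm (lam *\<^sub>R ww t A))\<^sup>2)))"
    using j1 j2 T1 by (intro add_mono mult_left_mono add_left_mono) auto
  finally show ?thesis .
qed

lemma main: "EE (\<lambda>A. P (pegasos_avg x y lam b T A)) - P ws \<le> G2 * (30 / (lam * real T))"
proof -
  let ?I = "{Suc kk..T}"
  have "EE (\<lambda>A. P (pegasos_avg x y lam b T A))
     \<le> EE (\<lambda>A. (1 / mm) * (\<Sum>t\<in>?I. P (ww t A))
     + (1 / real T) * (G2 / (2 * lam) + (2 / lam) * ((1 / mm) * (\<Sum>t\<in>?I. (norm (lam *\<^sub>R ww t A))\<^sup>2))))"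
    by (intro EE_mono pt_bound)
  also have "\<dots> = (1 / mm) * (\<Sum>t\<in>?I. EP t) + (1 / real T) * (G2 / (2 * lam) + (2 / lam) * ((1 / mm) * (\<Sum>t\<in>?I. Q t)))"
    by (simp only: EE_add EE_cmult EE_const EE_sum EP_def Q_def)
  finally have h: "EE (\<lambda>A. P (pegasos_avg x y lam b T A))
     \<le> (1 / mm) * (\<Sum>t\<in>?I. EP t) + (1 / real T) * (G2 / (2 * lam) + (2 / lam) * ((1 / mm) * (\<Sum>t\<in>?I. Q t)))" .
  have sQ: "(\<Sum>t\<in>?I. Q t) \<le> mm * G2"
  proof -
    have "(\<Sum>t\<in>?I. Q t) \<le> (\<Sum>t\<in>?I. G2)" by (intro sum_mono Q_bound) auto
    thus ?thesis by (simp add: mm_def)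
  qed
  have q2: "(2 / lam) * ((1 / mm) * (\<Sum>t\<in>?I. Q t)) \<le> 2 * G2 / lam"
  proof -
    have "(1 / mm) * (\<Sum>t\<in>?I. Q t) \<le> (1 / mm) * (mm * G2)" using sQ mm_pos by (intro mult_left_mono) auto
    hence "(1 / mm) * (\<Sum>t\<in>?I. Q t) \<le> G2" using mm_pos by simp
    thus ?thesis using lam by (simp add: field_simps)
  qed
  have sE: "(1 / mm) * (\<Sum>t\<in>?I. EP t) - P ws = (1 / mm) * (\<Sum>t\<in>?I. EP t - P ws)"
    using mm_pos by (simp add: sum_subtractf field_simps mm_def)
  have e1: "(1 / mm) * (\<Sum>t\<in>?I. EP t - P ws) \<le> (2 / real T) * (6 * G2 / lam)"
  proof -
    have "(1 / mm) * (\<Sum>t\<in>?I. EP t - P ws) \<le> (1 / mm) * (6 * G2 / lam)"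
      using sum_EP mm_pos by (intro mult_left_mono) auto
    also have "\<dots> \<le> (2 / real T) * (6 * G2 / lam)"
      using mm_ge G2_nonneg lam by (intro mult_right_mono) auto
    finally show ?thesis .
  qed
  have e2: "(1 / real T) * (G2 / (2 * lam) + (2 / lam) * ((1 / mm) * (\<Sum>t\<in>?I. Q t)))
      \<le> (1 / real T) * (G2 / (2 * lam) + 2 * G2 / lam)"
    using q2 T1 by (intro mult_left_mono add_left_mono) auto
  have fin: "(2 / real T) * (6 * G2 / lam) + (1 / real T) * (G2 / (2 * lam) + 2 * G2 / lam) \<le> G2 * (30 / (lam * real T))"
  proof -
    have "(2 / real T) * (6 * G2 / lam) + (1 / real T) * (G2 / (2 * lam) + 2 * G2 / lam) = G2 * (29 / 2 / (lam * real T))"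
      using lam T1 by (simp add: field_simps)
    also have "\<dots> \<le> G2 * (30 / (lam * real T))"
      using G2_nonneg lam T1 by (intro mult_left_mono divide_right_mono) auto
    finally show ?thesis .
  qed
  show ?thesis using h sE e1 e2 fin by linarith
qed

end

theorem theorem1:
  fixes n b T :: nat and x :: "nat \<Rightarrow> 'a::euclidean_space" and y :: "nat \<Rightarrow> real"
    and sigma2 lam :: real
  assumes "n \<ge> 2"
    and "\<forall>i<n. y i \<in> {-1, 1}"
    and "\<forall>i<n. norm (x i) \<le> 1"
    and "sigma2 \<ge> (1 / real n) * (spec_norm n x)\<^sup>2"
    and "lam > 0"
    and "b \<in> {1..n}"
    and "T \<ge> 1"
  shows "measure_pmf.expectation (batch_seq_pmf n b T)
            (\<lambda>A. svm_primal n x y lam (pegasos_avg x y lam b T A))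
          - (INF w. svm_primal n x y lam w)
         \<le> ((1 + (real b - 1) * (real n * sigma2 - 1) / (real n - 1)) / real b) * (30 / (lam * real T))"
proof -
  interpret peg n b T x y sigma2 lam
    by (rule peg.intro) (use assms in auto)
  have inf: "(INF w. svm_primal n x y lam w) = P ws"
    using INF_P[OF ws_min] by (simp add: P_def)
  have ex: "measure_pmf.expectation (batch_seq_pmf n b T) (\<lambda>A. svm_primal n x y lam (pegasos_avg x y lam b T A))
      = EE (\<lambda>A. P (pegasos_avg x y lam b T A))"
    by (simp add: EE_def M_def P_def)
  show ?thesis unfolding inf ex using main by (simp add: G2_def)
qed

end
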